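(* If a completely simple semigroup $S=(G,P,\Lambda,I)$ is an equational domain in the language $\mathcal{L}_S$, then its structural group $G$ is an equational domain in the group language $\mathcal{L}_G$.
   Context: Rees representation: a completely simple semigroup $S=(G,P,\Lambda,I)$ is given by a group $G$ (the structural group), index sets $\Lambda,I$ (each containing an element $1$), and a matrix $P=(p_{i\lambda})_{i\in I,\lambda\in\Lambda}$ over $G$ normalised so that $p_{1\lambda}=p_{i1}=1_G$; elements are triples $(\lambda,g,i)$ with product $(\lambda,g,i)(\mu,h,j)=(\lambda,gp_{i\mu}h,j)$ and inversion $(\lambda,g,i)^{-1}=(\lambda,p_{i\lambda}^{-1}g^{-1}p_{i\lambda}^{-1},i)$. The language $\mathcal{L}_S$ is $\{\cdot,{}^{-1}\}$ plus a constant for each element of $S$; the group language $\mathcal{L}_G$ is $\{\cdot,{}^{-1},1\}$ plus a constant for each element of $G$ (so equations over $G$ are equalities $w(X)=1$ with $w\in F(X)*G$). For either structure: an equation is an equality of two terms, a system is a set of equations, an algebraic set is the solution set of a system, and the structure is an equational domain (e.d.) if every finite union of algebraic sets is algebraic. *)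

theory Defs
  imports "HOL-Algebra.Group"
begin

text \<open>Elements of S = (G,P,Lambda,I) are triples (lambda, g, i), encoded as nested pairs.
  The sandwich matrix is P i lambda = p_{i lambda}.\<close>

definition rees_carrier ::
  "('g, 'b) monoid_scheme \<Rightarrow> 'l set \<Rightarrow> 'i set \<Rightarrow> ('l \<times> 'g \<times> 'i) set" where
  "rees_carrier G Lam I = Lam \<times> (carrier G \<times> I)"

definition rees_mult ::
  "('g, 'b) monoid_scheme \<Rightarrow> ('i \<Rightarrow> 'l \<Rightarrow> 'g) \<Rightarrow> ('l \<times> 'g \<times> 'i) \<Rightarrow> ('l \<times> 'g \<times> 'i) \<Rightarrow> ('l \<times> 'g \<times> 'i)" where
  "rees_mult G P x y = (case x of (l, g, i) \<Rightarrow> case y of (m, h, j) \<Rightarrow>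
      (l, g \<otimes>\<^bsub>G\<^esub> P i m \<otimes>\<^bsub>G\<^esub> h, j))"

definition rees_inv ::
  "('g, 'b) monoid_scheme \<Rightarrow> ('i \<Rightarrow> 'l \<Rightarrow> 'g) \<Rightarrow> ('l \<times> 'g \<times> 'i) \<Rightarrow> ('l \<times> 'g \<times> 'i)" where
  "rees_inv G P x = (case x of (l, g, i) \<Rightarrow>
      (l, inv\<^bsub>G\<^esub> (P i l) \<otimes>\<^bsub>G\<^esub> inv\<^bsub>G\<^esub> g \<otimes>\<^bsub>G\<^esub> inv\<^bsub>G\<^esub> (P i l), i))"

definition rees_data ::
  "('g, 'b) monoid_scheme \<Rightarrow> ('i \<Rightarrow> 'l \<Rightarrow> 'g) \<Rightarrow> 'l set \<Rightarrow> 'i set \<Rightarrow> 'l \<Rightarrow> 'i \<Rightarrow> bool" where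
  "rees_data G P Lam I l1 i1 \<longleftrightarrow> group G \<and> l1 \<in> Lam \<and> i1 \<in> I \<and>
     (\<forall>i\<in>I. \<forall>l\<in>Lam. P i l \<in> carrier G) \<and>
     (\<forall>l\<in>Lam. P i1 l = \<one>\<^bsub>G\<^esub>) \<and> (\<forall>i\<in>I. P i l1 = \<one>\<^bsub>G\<^esub>)"

datatype 'c sterm = SVar nat | SConst 'c | SMul "'c sterm" "'c sterm" | SInv "'c sterm"

fun svars :: "'c sterm \<Rightarrow> nat set" where
  "svars (SVar k) = {k}"
| "svars (SConst c) = {}"
| "svars (SMul t s) = svars t \<union> svars s"
| "svars (SInv t) = svars t"

fun sconsts :: "'c sterm \<Rightarrow> 'c set" where
  "sconsts (SVar k) = {}"
| "sconsts (SConst c) = {c}"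
| "sconsts (SMul t s) = sconsts t \<union> sconsts s"
| "sconsts (SInv t) = sconsts t"

fun seval :: "('g, 'b) monoid_scheme \<Rightarrow> ('i \<Rightarrow> 'l \<Rightarrow> 'g) \<Rightarrow> ('l \<times> 'g \<times> 'i) list
      \<Rightarrow> ('l \<times> 'g \<times> 'i) sterm \<Rightarrow> ('l \<times> 'g \<times> 'i)" where
  "seval G P xs (SVar k) = xs ! k"
| "seval G P xs (SConst c) = c"
| "seval G P xs (SMul t s) = rees_mult G P (seval G P xs t) (seval G P xs s)"
| "seval G P xs (SInv t) = rees_inv G P (seval G P xs t)"

definition s_algebraic ::
  "('g, 'b) monoid_scheme \<Rightarrow> ('i \<Rightarrow> 'l \<Rightarrow> 'g) \<Rightarrow> 'l set \<Rightarrow> 'i set \<Rightarrow> nat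
     \<Rightarrow> ('l \<times> 'g \<times> 'i) list set \<Rightarrow> bool" where
  "s_algebraic G P Lam I n Y \<longleftrightarrow>
    (\<exists>E :: (('l \<times> 'g \<times> 'i) sterm \<times> ('l \<times> 'g \<times> 'i) sterm) set.
       (\<forall>(t, s)\<in>E. svars t \<union> svars s \<subseteq> {..<n} \<and>
                    sconsts t \<union> sconsts s \<subseteq> rees_carrier G Lam I) \<and>
       Y = {xs. length xs = n \<and> set xs \<subseteq> rees_carrier G Lam I \<and>
                (\<forall>(t, s)\<in>E. seval G P xs t = seval G P xs s)})"

definition s_equational_domain ::
  "('g, 'b) monoid_scheme \<Rightarrow> ('i \<Rightarrow> 'l \<Rightarrow> 'g) \<Rightarrow> 'l set \<Rightarrow> 'i set \<Rightarrow> bool" where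
  "s_equational_domain G P Lam I \<longleftrightarrow>
    (\<forall>n Y1 Y2. s_algebraic G P Lam I n Y1 \<longrightarrow> s_algebraic G P Lam I n Y2 \<longrightarrow>
               s_algebraic G P Lam I n (Y1 \<union> Y2))"

datatype 'c gterm = GVar nat | GConst 'c | GOne | GMul "'c gterm" "'c gterm" | GInv "'c gterm"

fun gvars :: "'c gterm \<Rightarrow> nat set" where
  "gvars (GVar k) = {k}"
| "gvars (GConst c) = {}"
| "gvars GOne = {}"
| "gvars (GMul t s) = gvars t \<union> gvars s"
| "gvars (GInv t) = gvars t"

fun gconsts :: "'c gterm \<Rightarrow> 'c set" where
  "gconsts (GVar k) = {}"
| "gconsts (GConst c) = {c}"
| "gconsts GOne = {}"
| "gconsts (GMul t s) = gconsts t \<union> gconsts s"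
| "gconsts (GInv t) = gconsts t"

fun geval :: "('g, 'b) monoid_scheme \<Rightarrow> 'g list \<Rightarrow> 'g gterm \<Rightarrow> 'g" where
  "geval G xs (GVar k) = xs ! k"
| "geval G xs (GConst c) = c"
| "geval G xs GOne = \<one>\<^bsub>G\<^esub>"
| "geval G xs (GMul t s) = geval G xs t \<otimes>\<^bsub>G\<^esub> geval G xs s"
| "geval G xs (GInv t) = inv\<^bsub>G\<^esub> (geval G xs t)"

definition g_algebraic :: "('g, 'b) monoid_scheme \<Rightarrow> nat \<Rightarrow> 'g list set \<Rightarrow> bool" where
  "g_algebraic G n Y \<longleftrightarrow>
    (\<exists>E :: ('g gterm \<times> 'g gterm) set.
       (\<forall>(t, s)\<in>E. gvars t \<union> gvars s \<subseteq> {..<n} \<and> gconsts t \<union> gconsts s \<subseteq> carrier G) \<and>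
       Y = {xs. length xs = n \<and> set xs \<subseteq> carrier G \<and>
                (\<forall>(t, s)\<in>E. geval G xs t = geval G xs s)})"

definition g_equational_domain :: "('g, 'b) monoid_scheme \<Rightarrow> bool" where
  "g_equational_domain G \<longleftrightarrow>
    (\<forall>n Y1 Y2. g_algebraic G n Y1 \<longrightarrow> g_algebraic G n Y2 \<longrightarrow> g_algebraic G n (Y1 \<union> Y2))"

end

theory Submission
  imports Defs
begin

fun lamS :: "'l \<Rightarrow> ('l \<times> 'g \<times> 'i) sterm \<Rightarrow> 'l" where
  "lamS l1 (SVar k) = l1"
| "lamS l1 (SConst c) = fst c"
| "lamS l1 (SMul t s) = lamS l1 t"
| "lamS l1 (SInv t) = lamS l1 t"

fun idxS :: "'i \<Rightarrow> ('l \<times> 'g \<times> 'i) sterm \<Rightarrow> 'i" where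
  "idxS i1 (SVar k) = i1"
| "idxS i1 (SConst c) = snd (snd c)"
| "idxS i1 (SMul t s) = idxS i1 s"
| "idxS i1 (SInv t) = idxS i1 t"

fun trS :: "('i \<Rightarrow> 'l \<Rightarrow> 'g) \<Rightarrow> 'l \<Rightarrow> 'i \<Rightarrow> ('l \<times> 'g \<times> 'i) sterm \<Rightarrow> 'g gterm" where
  "trS P l1 i1 (SVar k) = GVar k"
| "trS P l1 i1 (SConst c) = GConst (fst (snd c))"
| "trS P l1 i1 (SMul t s) = GMul (GMul (trS P l1 i1 t) (GConst (P (idxS i1 t) (lamS l1 s)))) (trS P l1 i1 s)"
| "trS P l1 i1 (SInv t) = GMul (GMul (GInv (GConst (P (idxS i1 t) (lamS l1 t)))) (GInv (trS P l1 i1 t)))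
      (GInv (GConst (P (idxS i1 t) (lamS l1 t))))"

fun trG :: "'l \<Rightarrow> 'i \<Rightarrow> 'g \<Rightarrow> 'g gterm \<Rightarrow> ('l \<times> 'g \<times> 'i) sterm" where
  "trG l1 i1 u (GVar k) = SVar k"
| "trG l1 i1 u (GConst c) = SConst (l1, c, i1)"
| "trG l1 i1 u GOne = SConst (l1, u, i1)"
| "trG l1 i1 u (GMul t s) = SMul (trG l1 i1 u t) (trG l1 i1 u s)"
| "trG l1 i1 u (GInv t) = SInv (trG l1 i1 u t)"

lemma lamS_idxS_in:
  assumes "l1 \<in> Lam" "i1 \<in> I" "sconsts t \<subseteq> rees_carrier G Lam I"
  shows "lamS l1 t \<in> Lam \<and> idxS i1 t \<in> I"
  using assms(3) by (induction t) (auto simp: assms(1,2) rees_carrier_def)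

lemma trS_vars: "gvars (trS P l1 i1 t) \<subseteq> svars t"
  by (induction t) auto

lemma trS_consts:
  assumes "rees_data G P Lam I l1 i1" "sconsts t \<subseteq> rees_carrier G Lam I"
  shows "gconsts (trS P l1 i1 t) \<subseteq> carrier G"
  using assms(2)
proof (induction t)
  case (SMul t s)
  then show ?case using assms(1) lamS_idxS_in[of l1 Lam i1 I t G] lamS_idxS_in[of l1 Lam i1 I s G]
    by (auto simp: rees_data_def)
next
  case (SInv t)
  then show ?case using assms(1) lamS_idxS_in[of l1 Lam i1 I t G]
    by (auto simp: rees_data_def)
qed (auto simp: rees_carrier_def)

lemma eval_trS:
  assumes rd: "rees_data G P Lam I l1 i1" and gs: "set gs \<subseteq> carrier G"
    and "svars t \<subseteq> {..<length gs}" and "sconsts t \<subseteq> rees_carrier G Lam I"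
  shows "seval G P (map (\<lambda>g. (l1, g, i1)) gs) t = (lamS l1 t, geval G gs (trS P l1 i1 t), idxS i1 t)
     \<and> geval G gs (trS P l1 i1 t) \<in> carrier G"
  using assms(3,4)
proof (induction t)
  case (SVar k)
  then show ?case using gs by (auto simp: nth_mem subset_iff)
next
  case (SConst c)
  then show ?case by (cases c) (auto simp: rees_carrier_def)
next
  case (SMul t s)
  have grp: "group G" using rd by (simp add: rees_data_def)
  have P: "P (idxS i1 t) (lamS l1 s) \<in> carrier G"
    using rd SMul.prems lamS_idxS_in[of l1 Lam i1 I t G] lamS_idxS_in[of l1 Lam i1 I s G]
    by (auto simp: rees_data_def)
  show ?case using SMul P group.is_monoid[OF grp]
    by (auto simp: rees_mult_def monoid.m_closed)
next
  case (SInv t)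
  have grp: "group G" using rd by (simp add: rees_data_def)
  have P: "P (idxS i1 t) (lamS l1 t) \<in> carrier G"
    using rd SInv.prems lamS_idxS_in[of l1 Lam i1 I t G]
    by (auto simp: rees_data_def)
  show ?case using SInv P grp
    by (auto simp: rees_inv_def group.inv_closed monoid.m_closed group.is_monoid)
qed

lemma eval_trG:
  assumes rd: "rees_data G P Lam I l1 i1" and gs: "set gs \<subseteq> carrier G"
    and "gvars t \<subseteq> {..<length gs}" and "gconsts t \<subseteq> carrier G"
  shows "seval G P (map (\<lambda>g. (l1, g, i1)) gs) (trG l1 i1 \<one>\<^bsub>G\<^esub> t) = (l1, geval G gs t, i1)
     \<and> geval G gs t \<in> carrier G"
  using assms(3,4)
proof (induction t)
  case (GVar k)
  then show ?case using gs by (auto simp: nth_mem subset_iff)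
next
  case (GMul t s)
  have grp: "group G" and P: "P i1 l1 = \<one>\<^bsub>G\<^esub>" using rd by (auto simp: rees_data_def)
  show ?case using GMul P grp
    by (auto simp: rees_mult_def monoid.m_closed group.is_monoid)
next
  case (GInv t)
  have grp: "group G" and P: "P i1 l1 = \<one>\<^bsub>G\<^esub>" using rd by (auto simp: rees_data_def)
  show ?case using GInv P grp
    by (auto simp: rees_inv_def group.inv_closed monoid.m_closed group.is_monoid monoid.inv_one
        monoid.l_one monoid.r_one)
qed (use rd in \<open>auto simp: rees_data_def group.is_monoid monoid.one_closed\<close>)

lemma trG_vars: "svars (trG l1 i1 u t) = gvars t"
  by (induction t) auto

lemma trG_consts:
  assumes "rees_data G P Lam I l1 i1" "gconsts t \<subseteq> carrier G"
  shows "sconsts (trG l1 i1 \<one>\<^bsub>G\<^esub> t) \<subseteq> rees_carrier G Lam I"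
  using assms by (induction t) (auto simp: rees_carrier_def rees_data_def group.is_monoid monoid.one_closed)


lemma inj_phi: "inj (map (\<lambda>g. (l1, g, i1)))"
  by (rule inj_mapI) (auto simp: inj_def)

lemma g_to_s:
  assumes rd: "rees_data G P Lam I l1 i1" and "g_algebraic G n Y"
  shows "s_algebraic G P Lam I n (map (\<lambda>g. (l1, g, i1)) ` Y)"
proof -
  have grp: "group G" and l1: "l1 \<in> Lam" and i1: "i1 \<in> I"
    and Pc: "\<forall>i\<in>I. \<forall>l\<in>Lam. P i l \<in> carrier G"
    and P1: "\<forall>l\<in>Lam. P i1 l = \<one>\<^bsub>G\<^esub>" and P2: "\<forall>i\<in>I. P i l1 = \<one>\<^bsub>G\<^esub>"
    using rd by (auto simp: rees_data_def)
  have one: "\<one>\<^bsub>G\<^esub> \<in> carrier G" using grp by (simp add: group.is_monoid monoid.one_closed)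
  obtain E where E: "\<forall>(t, s)\<in>E. gvars t \<union> gvars s \<subseteq> {..<n} \<and> gconsts t \<union> gconsts s \<subseteq> carrier G"
    and Y: "Y = {xs. length xs = n \<and> set xs \<subseteq> carrier G \<and> (\<forall>(t, s)\<in>E. geval G xs t = geval G xs s)}"
    using assms(2) by (auto simp: g_algebraic_def)
  define e where "e = SConst (l1, \<one>\<^bsub>G\<^esub>, i1)"
  define E' where "E' = (\<lambda>(t, s). (trG l1 i1 \<one>\<^bsub>G\<^esub> t, trG l1 i1 \<one>\<^bsub>G\<^esub> s)) ` E
      \<union> {(SVar k, SMul (SMul e (SVar k)) e) | k. k < n}"
  let ?phi = "map (\<lambda>g. (l1, g, i1))"
  let ?C = "rees_carrier G Lam I"
  have cond: "\<forall>(t, s)\<in>E'. svars t \<union> svars s \<subseteq> {..<n} \<and> sconsts t \<union> sconsts s \<subseteq> ?C"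
  proof
    fix x assume "x \<in> E'"
    then show "case x of (t, s) \<Rightarrow> svars t \<union> svars s \<subseteq> {..<n} \<and> sconsts t \<union> sconsts s \<subseteq> ?C"
    proof (cases "x \<in> {(SVar k, SMul (SMul e (SVar k)) e) | k. k < n}")
      case True then show ?thesis using l1 i1 one by (auto simp: e_def rees_carrier_def)
    next
      case False
      with \<open>x \<in> E'\<close> obtain t s where ts: "(t, s) \<in> E" "x = (trG l1 i1 \<one>\<^bsub>G\<^esub> t, trG l1 i1 \<one>\<^bsub>G\<^esub> s)"
        unfolding E'_def by auto
      have pr: "gvars t \<union> gvars s \<subseteq> {..<n}" "gconsts t \<subseteq> carrier G" "gconsts s \<subseteq> carrier G"
        using E ts(1) by auto
      show ?thesis using trG_consts[OF rd pr(2)] trG_consts[OF rd pr(3)] pr(1) ts(2)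
        by (simp add: trG_vars)
    qed
  qed
  have mulee: "rees_mult G P (rees_mult G P (l1, \<one>\<^bsub>G\<^esub>, i1) (l, g, i)) (l1, \<one>\<^bsub>G\<^esub>, i1)
      = (l1, g, i1)" if "l \<in> Lam" "i \<in> I" "g \<in> carrier G" for l g i
    using that P1 P2 grp by (auto simp: rees_mult_def group.is_monoid monoid.l_one monoid.r_one)
  have "?phi ` Y = {xs. length xs = n \<and> set xs \<subseteq> ?C \<and> (\<forall>(t, s)\<in>E'. seval G P xs t = seval G P xs s)}"
  proof (rule Set.set_eqI, rule iffI)
    fix xs assume "xs \<in> ?phi ` Y"
    then obtain gs where gs: "gs \<in> Y" "xs = ?phi gs" by auto
    have gsc: "set gs \<subseteq> carrier G" "length gs = n" using gs Y by auto
    have "seval G P xs t = seval G P xs s" if "(t, s) \<in> E'" for t s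
    proof (cases "(t, s) \<in> {(SVar k, SMul (SMul e (SVar k)) e) | k. k < n}")
      case True
      then obtain k where k: "k < n" "t = SVar k" "s = SMul (SMul e (SVar k)) e" by auto
      have "gs ! k \<in> carrier G" using gsc k by (auto simp: nth_mem subset_iff)
      then show ?thesis using k gs gsc mulee[OF l1 i1] by (simp add: e_def)
    next
      case False
      with that obtain t0 s0 where ts: "(t0, s0) \<in> E" "t = trG l1 i1 \<one>\<^bsub>G\<^esub> t0" "s = trG l1 i1 \<one>\<^bsub>G\<^esub> s0"
        unfolding E'_def by auto
      have eq: "geval G gs t0 = geval G gs s0" using gs ts Y by auto
      show ?thesis using eval_trG[OF rd gsc(1), of t0] eval_trG[OF rd gsc(1), of s0] E ts gs gsc eq
        by auto
    qed
    moreover have "set xs \<subseteq> ?C" using gs gsc l1 i1 by (auto simp: rees_carrier_def)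
    ultimately show "xs \<in> {xs. length xs = n \<and> set xs \<subseteq> ?C \<and> (\<forall>(t, s)\<in>E'. seval G P xs t = seval G P xs s)}"
      using gs gsc by auto
  next
    fix xs assume xs: "xs \<in> {xs. length xs = n \<and> set xs \<subseteq> ?C \<and> (\<forall>(t, s)\<in>E'. seval G P xs t = seval G P xs s)}"
    define gs where "gs = map (\<lambda>x. fst (snd x)) xs"
    have shape: "xs ! k = (l1, gs ! k, i1)" if "k < n" for k
    proof -
      have "(SVar k, SMul (SMul e (SVar k)) e) \<in> E'" using that unfolding E'_def by auto
      then have eq: "xs ! k = rees_mult G P (rees_mult G P (l1, \<one>\<^bsub>G\<^esub>, i1) (xs ! k)) (l1, \<one>\<^bsub>G\<^esub>, i1)"
        using xs by (force simp: e_def)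
      have "xs ! k \<in> set xs" using that xs by simp
      then have "xs ! k \<in> ?C" using xs by blast
      then obtain l g i where lgi: "xs ! k = (l, g, i)" "l \<in> Lam" "i \<in> I" "g \<in> carrier G"
        by (auto simp: rees_carrier_def)
      have "xs ! k = (l1, g, i1)" using eq lgi mulee by simp
      then show ?thesis using that xs by (simp add: gs_def)
    qed
    have xs_eq: "xs = ?phi gs"
      by (rule nth_equalityI) (use xs shape in \<open>auto simp: gs_def\<close>)
    have gsc: "set gs \<subseteq> carrier G" "length gs = n"
      using xs by (auto simp: gs_def rees_carrier_def)
    have "geval G gs t = geval G gs s" if "(t, s) \<in> E" for t s
    proof -
      have "(trG l1 i1 \<one>\<^bsub>G\<^esub> t, trG l1 i1 \<one>\<^bsub>G\<^esub> s) \<in> E'" using that unfolding E'_def by force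
      then have "seval G P xs (trG l1 i1 \<one>\<^bsub>G\<^esub> t) = seval G P xs (trG l1 i1 \<one>\<^bsub>G\<^esub> s)" using xs by auto
      then show ?thesis using eval_trG[OF rd gsc(1), of t] eval_trG[OF rd gsc(1), of s] E that gsc xs_eq
        by auto
    qed
    then have "gs \<in> Y" using Y gsc by auto
    then show "xs \<in> ?phi ` Y" using xs_eq by auto
  qed
  then show ?thesis using cond unfolding s_algebraic_def by blast
qed

lemma s_to_g:
  assumes rd: "rees_data G P Lam I l1 i1"
    and sa: "s_algebraic G P Lam I n (map (\<lambda>g. (l1, g, i1)) ` Y)"
    and w: "w \<in> Y" and Ysub: "Y \<subseteq> {gs. length gs = n \<and> set gs \<subseteq> carrier G}"
  shows "g_algebraic G n Y"
proof -
  have l1: "l1 \<in> Lam" and i1: "i1 \<in> I" using rd by (auto simp: rees_data_def)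
  let ?phi = "map (\<lambda>g. (l1, g, i1))"
  let ?C = "rees_carrier G Lam I"
  obtain E where E: "\<forall>(t, s)\<in>E. svars t \<union> svars s \<subseteq> {..<n} \<and> sconsts t \<union> sconsts s \<subseteq> ?C"
    and Z: "?phi ` Y = {xs. length xs = n \<and> set xs \<subseteq> ?C \<and> (\<forall>(t, s)\<in>E. seval G P xs t = seval G P xs s)}"
    using sa by (auto simp: s_algebraic_def)
  define E' where "E' = (\<lambda>(t, s). (trS P l1 i1 t, trS P l1 i1 s)) ` E"
  have cond: "\<forall>(t, s)\<in>E'. gvars t \<union> gvars s \<subseteq> {..<n} \<and> gconsts t \<union> gconsts s \<subseteq> carrier G"
  proof -
    have c1: "gvars (trS P l1 i1 t) \<union> gvars (trS P l1 i1 s) \<subseteq> {..<n} \<and>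
        gconsts (trS P l1 i1 t) \<union> gconsts (trS P l1 i1 s) \<subseteq> carrier G" if "(t, s) \<in> E" for t s
    proof -
      have "svars t \<union> svars s \<subseteq> {..<n}" "sconsts t \<subseteq> ?C" "sconsts s \<subseteq> ?C" using E that by auto
      then show ?thesis using trS_vars[of P l1 i1 t] trS_vars[of P l1 i1 s]
          trS_consts[OF rd, of t] trS_consts[OF rd, of s] by auto
    qed
    show ?thesis unfolding E'_def
    proof (intro ballI)
      fix x assume "x \<in> (\<lambda>(t, s). (trS P l1 i1 t, trS P l1 i1 s)) ` E"
      then obtain t s where ts: "(t, s) \<in> E" "x = (trS P l1 i1 t, trS P l1 i1 s)" by auto
      show "case x of (t, s) \<Rightarrow> gvars t \<union> gvars s \<subseteq> {..<n} \<and> gconsts t \<union> gconsts s \<subseteq> carrier G"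
        using c1[OF ts(1)] ts(2) by simp
    qed
  qed
  have wc: "set w \<subseteq> carrier G" "length w = n" using w Ysub by auto
  have phiw: "?phi w \<in> ?phi ` Y" using w by auto
  have match: "lamS l1 t = lamS l1 s \<and> idxS i1 t = idxS i1 s" if "(t, s) \<in> E" for t s
  proof -
    have "seval G P (?phi w) t = seval G P (?phi w) s" using phiw Z that by blast
    then show ?thesis using eval_trS[OF rd wc(1), of t] eval_trS[OF rd wc(1), of s] E that wc by auto
  qed
  have "Y = {xs. length xs = n \<and> set xs \<subseteq> carrier G \<and> (\<forall>(t, s)\<in>E'. geval G xs t = geval G xs s)}"
  proof (rule Set.set_eqI, rule iffI)
    fix gs assume gs: "gs \<in> Y"
    have gsc: "set gs \<subseteq> carrier G" "length gs = n" using gs Ysub by auto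
    have "?phi gs \<in> ?phi ` Y" using gs by auto
    then have ev: "\<forall>(t, s)\<in>E. seval G P (?phi gs) t = seval G P (?phi gs) s" using Z by blast
    have "geval G gs t = geval G gs s" if tsE: "(t, s) \<in> E'" for t s
    proof -
      obtain t0 s0 where ts: "(t0, s0) \<in> E" "t = trS P l1 i1 t0" "s = trS P l1 i1 s0"
        using tsE unfolding E'_def by auto
      have e0: "seval G P (?phi gs) t0 = seval G P (?phi gs) s0" using ev ts(1) by blast
      have pr: "svars t0 \<subseteq> {..<length gs}" "sconsts t0 \<subseteq> ?C"
        "svars s0 \<subseteq> {..<length gs}" "sconsts s0 \<subseteq> ?C" using E ts(1) gsc by auto
      show ?thesis using e0 eval_trS[OF rd gsc(1) pr(1,2)] eval_trS[OF rd gsc(1) pr(3,4)] ts(2,3)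
        by simp
    qed
    then show "gs \<in> {xs. length xs = n \<and> set xs \<subseteq> carrier G \<and> (\<forall>(t, s)\<in>E'. geval G xs t = geval G xs s)}"
      using gsc by auto
  next
    fix gs assume gs: "gs \<in> {xs. length xs = n \<and> set xs \<subseteq> carrier G \<and> (\<forall>(t, s)\<in>E'. geval G xs t = geval G xs s)}"
    have gsc: "set gs \<subseteq> carrier G" "length gs = n" using gs by auto
    have "seval G P (?phi gs) t = seval G P (?phi gs) s" if tsE: "(t, s) \<in> E" for t s
    proof -
      have "(trS P l1 i1 t, trS P l1 i1 s) \<in> E'" using tsE unfolding E'_def by (rule rev_image_eqI) simp
      then have ge: "geval G gs (trS P l1 i1 t) = geval G gs (trS P l1 i1 s)" using gs by auto
      have pr: "svars t \<subseteq> {..<length gs}" "sconsts t \<subseteq> ?C"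
        "svars s \<subseteq> {..<length gs}" "sconsts s \<subseteq> ?C" using E tsE gsc by auto
      show ?thesis using ge match[OF tsE] eval_trS[OF rd gsc(1) pr(1,2)] eval_trS[OF rd gsc(1) pr(3,4)]
        by simp
    qed
    then have "\<forall>(t, s)\<in>E. seval G P (?phi gs) t = seval G P (?phi gs) s" by blast
    moreover have "set (?phi gs) \<subseteq> ?C" using gsc l1 i1 by (auto simp: rees_carrier_def)
    moreover have "length (?phi gs) = n" using gsc by simp
    ultimately have "?phi gs \<in> ?phi ` Y" unfolding Z by blast
    then obtain hs where hs: "hs \<in> Y" "?phi gs = ?phi hs" by blast
    have "gs = hs" using hs(2) by (rule injD[OF inj_phi])
    then show "gs \<in> Y" using hs(1) by simp
  qed
  then show ?thesis using cond unfolding g_algebraic_def by blast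
qed

theorem mainTheorem3:
  fixes G :: "('g, 'b) monoid_scheme" and P :: "'i \<Rightarrow> 'l \<Rightarrow> 'g"
    and Lam :: "'l set" and I :: "'i set" and l1 :: 'l and i1 :: 'i
  assumes "rees_data G P Lam I l1 i1"
    and "s_equational_domain G P Lam I"
  shows "g_equational_domain G"
  unfolding g_equational_domain_def
proof (intro allI impI)
  fix n Y1 Y2 assume Y1: "g_algebraic G n Y1" and Y2: "g_algebraic G n Y2"
  let ?phi = "map (\<lambda>g. (l1, g, i1))"
  have sub: "Y \<subseteq> {gs. length gs = n \<and> set gs \<subseteq> carrier G}" if "g_algebraic G n Y" for Y
    using that by (auto simp: g_algebraic_def)
  show "g_algebraic G n (Y1 \<union> Y2)"
  proof (cases "Y1 \<union> Y2 = {}")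
    case True then show ?thesis using Y1 by simp
  next
    case False
    then obtain w where w: "w \<in> Y1 \<union> Y2" by auto
    have "s_algebraic G P Lam I n (?phi ` Y1 \<union> ?phi ` Y2)"
      using assms(2) g_to_s[OF assms(1) Y1] g_to_s[OF assms(1) Y2]
      unfolding s_equational_domain_def by blast
    then have "s_algebraic G P Lam I n (?phi ` (Y1 \<union> Y2))" by (simp add: image_Un)
    then show ?thesis using s_to_g[OF assms(1) _ w] sub[OF Y1] sub[OF Y2] by blast
  qed
qed

end
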